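(* Let $d=1$, $\mathcal{O}_1=\mathbb{Z}[i]$, $\Delta$ a positive integer not of the form $\beta\bar\beta$ with $\beta\in\mathbb{Z}[i]$, $k\ge1$ odd, and $$P_{k,\Delta}(z,\bar z)=\sum_{\substack{(a,b,c)\in\mathbb{Z}\times\mathbb{Z}[i]\times\mathbb{Z}\\ b\bar b-ac=\Delta,\ c<0<a}}\left(az\bar z+bz+\bar b\bar z+c\right)^k .$$ Then $P_{k,\Delta}\in W_{k,k}^1$. Consequently there is a (unique) $f\in C_p(\Gamma_1,V_{k,k})$ with $f(S)=P_{k,\Delta}$.
   Context: $V_{k,k}$: polynomials $\sum_{0\le i,j\le k}c_{ij}z^i\bar z^j$ over $\mathbb{C}$ with right action $(P|\gamma)(z,\bar z)=(cz+e)^k\overline{(cz+e)}^kP\!\left(\frac{az+b}{cz+e},\frac{\bar a\bar z+\bar b}{\bar c\bar z+\bar e}\right)$ for $\gamma=\begin{psmallmatrix}a&b\\c&e\end{psmallmatrix}$, extended linearly; $\ker(X)=\{P:P|X=0\}$. $S=\begin{psmallmatrix}0&-1\\1&0\end{psmallmatrix}$, $T=\begin{psmallmatrix}1&1\\0&1\end{psmallmatrix}$, $T_\omega=\begin{psmallmatrix}1&i\\0&1\end{psmallmatrix}$, $L=\begin{psmallmatrix}i&0\\0&-i\end{psmallmatrix}$, $U=TS$, $E=T_\omega SL$; $W_{k,k}=\ker(\mathbf{1}+S)\cap\ker(\mathbf{1}-L)\cap\ker(\mathbf{1}+U+U^2)\cap\ker(\mathbf{1}+E+E^2)$ and $W_{k,k}^1=\{P\in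 W_{k,k}:P(iz,\bar i\bar z)=P(z,\bar z)\}$. $\Gamma_1=\mathbf{PSL}(2,\mathbb{Z}[i])$ and $C_p(\Gamma_1,V_{k,k})$ is the space of $f:\Gamma_1\to V_{k,k}$ with $f(\gamma_1\gamma_2)=f(\gamma_1)|\gamma_2+f(\gamma_2)$ and $f(T)=f(T_\omega)=f(L)=0$. *)

theory Defs
  imports Complex_Main "HOL-Computational_Algebra.Polynomial"
begin

text \<open>Elements of V_{k,k} are polynomials in two formal variables z and zbar,
  represented as bivariate polynomials: the outer variable is z, the inner one is zbar.\<close>

type_synonym bipoly = "complex poly poly"

definition Zv :: bipoly where "Zv = [:0, 1:]"
definition Wv :: bipoly where "Wv = [:[:0, 1:]:]"
definition cst :: "complex \<Rightarrow> bipoly" where "cst c = [:[:c:]:]"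

definition bcoeff :: "bipoly \<Rightarrow> nat \<Rightarrow> nat \<Rightarrow> complex" where
  "bcoeff P i j = coeff (coeff P i) j"

definition eval2 :: "bipoly \<Rightarrow> complex \<Rightarrow> complex \<Rightarrow> complex" where
  "eval2 P z w = poly (map_poly (\<lambda>q. poly q w) P) z"

definition Vkk :: "nat \<Rightarrow> bipoly set" where
  "Vkk k = {P. \<forall>i j. (k < i \<or> k < j) \<longrightarrow> bcoeff P i j = 0}"

text \<open>2x2 complex matrices (a, b, c, e) = [[a, b], [c, e]]\<close>
type_synonym mat2 = "complex \<times> complex \<times> complex \<times> complex"

fun mmul :: "mat2 \<Rightarrow> mat2 \<Rightarrow> mat2" where
  "mmul (a, b, c, e) (a', b', c', e') =
     (a * a' + b * c', a * b' + b * e', c * a' + e * c', c * b' + e * e')"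

definition Imat :: mat2 where "Imat = (1, 0, 0, 1)"
definition Smat :: mat2 where "Smat = (0, -1, 1, 0)"
definition Tmat :: mat2 where "Tmat = (1, 1, 0, 1)"
definition Twmat :: mat2 where "Twmat = (1, \<i>, 0, 1)"
definition Lmat :: mat2 where "Lmat = (\<i>, 0, 0, -\<i>)"
definition Umat :: mat2 where "Umat = mmul Tmat Smat"
definition Emat :: mat2 where "Emat = mmul (mmul Twmat Smat) Lmat"

text \<open>The slash action
  (P|gamma)(z,zbar) = (cz+e)^k conj(cz+e)^k P((az+b)/(cz+e), conj((az+b)/(cz+e))),
  written out for P = sum c_ij z^i zbar^j of bidegree at most (k,k) as the polynomial
  sum c_ij (az+b)^i (cz+e)^(k-i) (conj a zbar + conj b)^j (conj c zbar + conj e)^(k-j).\<close>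
fun slash :: "nat \<Rightarrow> bipoly \<Rightarrow> mat2 \<Rightarrow> bipoly" where
  "slash k P (a, b, c, e) =
     (\<Sum>i\<le>k. \<Sum>j\<le>k. cst (bcoeff P i j)
        * (cst a * Zv + cst b) ^ i * (cst c * Zv + cst e) ^ (k - i)
        * (cst (cnj a) * Wv + cst (cnj b)) ^ j * (cst (cnj c) * Wv + cst (cnj e)) ^ (k - j))"

text \<open>Group ring elements: finite formal combinations, given as lists of (coefficient, matrix);
  the action is extended linearly.\<close>
definition slash_gr :: "nat \<Rightarrow> bipoly \<Rightarrow> (complex \<times> mat2) list \<Rightarrow> bipoly" where
  "slash_gr k P X = (\<Sum>(c, g) \<leftarrow> X. cst c * slash k P g)"

definition kerX :: "nat \<Rightarrow> (complex \<times> mat2) list \<Rightarrow> bipoly set" where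
  "kerX k X = {P \<in> Vkk k. slash_gr k P X = 0}"

definition Wkk :: "nat \<Rightarrow> bipoly set" where
  "Wkk k = kerX k [(1, Imat), (1, Smat)]
         \<inter> kerX k [(1, Imat), (-1, Lmat)]
         \<inter> kerX k [(1, Imat), (1, Umat), (1, mmul Umat Umat)]
         \<inter> kerX k [(1, Imat), (1, Emat), (1, mmul Emat Emat)]"

definition Wkk1 :: "nat \<Rightarrow> bipoly set" where
  "Wkk1 k = {P \<in> Wkk k. \<forall>z w. eval2 P (\<i> * z) (cnj \<i> * w) = eval2 P z w}"

definition gauss_ints :: "complex set" where
  "gauss_ints = {z. Re z \<in> \<int> \<and> Im z \<in> \<int>}"

text \<open>SL(2, Z[i]); PSL(2, Z[i]) is modelled by functions on SL(2,Z[i]) invariant under -1.\<close>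
definition SL2Zi :: "mat2 set" where
  "SL2Zi = {(a, b, c, e). a \<in> gauss_ints \<and> b \<in> gauss_ints \<and> c \<in> gauss_ints \<and> e \<in> gauss_ints
                         \<and> a * e - b * c = 1}"

fun mneg :: "mat2 \<Rightarrow> mat2" where
  "mneg (a, b, c, e) = (-a, -b, -c, -e)"

definition Cp :: "nat \<Rightarrow> (mat2 \<Rightarrow> bipoly) set" where
  "Cp k = {f. (\<forall>g \<in> SL2Zi. f g \<in> Vkk k \<and> f (mneg g) = f g)
             \<and> (\<forall>g1 \<in> SL2Zi. \<forall>g2 \<in> SL2Zi. f (mmul g1 g2) = slash k (f g1) g2 + f g2)
             \<and> f Tmat = 0 \<and> f Twmat = 0 \<and> f Lmat = 0}"

definition Pk_index :: "int \<Rightarrow> (int \<times> complex \<times> int) set" where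
  "Pk_index \<Delta> = {(a, b, c). b \<in> gauss_ints \<and> b * cnj b - of_int (a * c) = of_int \<Delta>
                               \<and> c < 0 \<and> 0 < a}"

definition Pk_Delta :: "nat \<Rightarrow> int \<Rightarrow> bipoly" where
  "Pk_Delta k \<Delta> =
     (\<Sum>(a, b, c) \<in> Pk_index \<Delta>.
        (cst (of_int a) * Zv * Wv + cst b * Zv + cst (cnj b) * Wv + cst (of_int c)) ^ k)"

end

theory Submission
  imports Defs
begin


lemma eval2_pCons: "eval2 (pCons q P) z w = poly q w + z * eval2 P z w"
  by (simp add: eval2_def map_poly_pCons)

lemma map_poly_evw_add: "map_poly (\<lambda>q. poly q w) (P + R) = map_poly (\<lambda>q. poly q w) P + map_poly (\<lambda>q. poly q w) R"
  by (intro poly_eqI) (simp add: coeff_map_poly)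

lemma eval2_add [simp]: "eval2 (P + R) z w = eval2 P z w + eval2 R z w"
  by (simp add: eval2_def map_poly_evw_add)

lemma eval2_0 [simp]: "eval2 0 z w = 0"
  by (simp add: eval2_def)

lemma eval2_uminus [simp]: "eval2 (- P) z w = - eval2 P z w"
proof -
  have "map_poly (\<lambda>q. poly q w) (- P) = - map_poly (\<lambda>q. poly q w) P"
    by (intro poly_eqI) (simp add: coeff_map_poly)
  then show ?thesis by (simp add: eval2_def)
qed

lemma eval2_diff [simp]: "eval2 (P - R) z w = eval2 P z w - eval2 R z w"
  using eval2_add[of P "- R" z w] by simp

lemma eval2_smult: "eval2 (smult c P) z w = poly c w * eval2 P z w"
  by (simp add: eval2_def map_poly_smult)

lemma eval2_mult [simp]: "eval2 (P * R) z w = eval2 P z w * eval2 R z w"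
proof (induction P)
  case 0
  then show ?case by simp
next
  case (pCons a p)
  have "eval2 (pCons a p * R) z w = eval2 (smult a R + pCons 0 (p * R)) z w"
    by (simp add: mult_pCons_left)
  also have "\<dots> = poly a w * eval2 R z w + z * (eval2 p z w * eval2 R z w)"
    by (simp add: eval2_smult eval2_pCons pCons.IH)
  finally show ?case by (simp add: eval2_pCons algebra_simps)
qed

lemma eval2_1 [simp]: "eval2 1 z w = 1"
  by (simp add: eval2_def)

lemma eval2_power [simp]: "eval2 (P ^ n) z w = eval2 P z w ^ n"
  by (induction n) auto

lemma eval2_sum: "eval2 (sum F S) z w = (\<Sum>x\<in>S. eval2 (F x) z w)"
  by (induction S rule: infinite_finite_induct) auto

lemma eval2_cst [simp]: "eval2 (cst c) z w = c"
  by (simp add: eval2_def cst_def map_poly_pCons)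

lemma eval2_Zv [simp]: "eval2 Zv z w = z"
  by (simp add: eval2_def Zv_def map_poly_pCons)

lemma eval2_Wv [simp]: "eval2 Wv z w = w"
  by (simp add: eval2_def Wv_def map_poly_pCons)

lemma infinite_compl_finite: "finite (A :: complex set) \<Longrightarrow> infinite (UNIV - A)"
  using Finite_Set.finite_Diff2 infinite_UNIV_char_0 by blast

lemma eval2_inj_exc:
  assumes "finite Z0" "finite W0"
    and "\<And>z w. z \<notin> Z0 \<Longrightarrow> w \<notin> W0 \<Longrightarrow> eval2 P z w = eval2 R z w"
  shows "P = R"
proof -
  define D where "D = P - R"
  have ev: "eval2 D z w = 0" if "z \<notin> Z0" "w \<notin> W0" for z w
    using assms(3)[OF that] by (simp add: D_def)
  have mp: "map_poly (\<lambda>q. poly q w) D = 0" if "w \<notin> W0" for w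
  proof (rule ccontr)
    assume ne: "map_poly (\<lambda>q. poly q w) D \<noteq> 0"
    have "UNIV - Z0 \<subseteq> {z. poly (map_poly (\<lambda>q. poly q w) D) z = 0}"
      using ev[OF _ that] by (auto simp: eval2_def)
    moreover have "finite {z. poly (map_poly (\<lambda>q. poly q w) D) z = 0}"
      by (rule poly_roots_finite[OF ne])
    ultimately show False using infinite_compl_finite[OF assms(1)] finite_subset by blast
  qed
  have "coeff D i = 0" for i
  proof (rule ccontr)
    assume ne: "coeff D i \<noteq> 0"
    have "UNIV - W0 \<subseteq> {w. poly (coeff D i) w = 0}"
    proof
      fix w assume "w \<in> UNIV - W0"
      then have "coeff (map_poly (\<lambda>q. poly q w) D) i = 0" using mp by auto
      then show "w \<in> {w. poly (coeff D i) w = 0}" by (simp add: coeff_map_poly)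
    qed
    moreover have "finite {w. poly (coeff D i) w = 0}"
      by (rule poly_roots_finite[OF ne])
    ultimately show False using infinite_compl_finite[OF assms(2)] finite_subset by blast
  qed
  then have "D = 0" by (simp add: poly_eq_iff)
  then show ?thesis by (simp add: D_def)
qed

lemma eval2_inj: "(\<And>z w. eval2 P z w = eval2 R z w) \<Longrightarrow> P = R"
  by (rule eval2_inj_exc[of "{}" "{}"]) auto



lemma poly_sum_le:
  assumes "degree (p :: complex poly) \<le> n"
  shows "poly p x = (\<Sum>i\<le>n. coeff p i * x ^ i)"
proof -
  have "poly p x = poly (\<Sum>i\<le>n. monom (coeff p i) i) x"
    using poly_as_sum_of_monoms'[OF assms] by simp
  also have "\<dots> = (\<Sum>i\<le>n. coeff p i * x ^ i)"
    by (simp add: poly_sum poly_monom)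
  finally show ?thesis .
qed

lemma Vkk_coeff_deg: "P \<in> Vkk k \<Longrightarrow> degree (coeff P i) \<le> k"
  by (rule degree_le) (auto simp: Vkk_def bcoeff_def)

lemma Vkk_coeff_zero: "P \<in> Vkk k \<Longrightarrow> k < i \<Longrightarrow> coeff P i = 0"
  by (rule poly_eqI) (auto simp: Vkk_def bcoeff_def)

lemma eval2_expand:
  assumes "P \<in> Vkk k"
  shows "eval2 P z w = (\<Sum>i\<le>k. \<Sum>j\<le>k. bcoeff P i j * z ^ i * w ^ j)"
proof -
  let ?p = "map_poly (\<lambda>q. poly q w) P"
  have c: "coeff ?p i = poly (coeff P i) w" for i by (simp add: coeff_map_poly)
  have "degree ?p \<le> k"
    by (rule degree_le) (auto simp: c Vkk_coeff_zero[OF assms])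
  then have "eval2 P z w = (\<Sum>i\<le>k. coeff ?p i * z ^ i)"
    unfolding eval2_def by (rule poly_sum_le)
  also have "\<dots> = (\<Sum>i\<le>k. (\<Sum>j\<le>k. bcoeff P i j * w ^ j) * z ^ i)"
    by (simp add: c poly_sum_le[OF Vkk_coeff_deg[OF assms]] bcoeff_def)
  also have "\<dots> = (\<Sum>i\<le>k. \<Sum>j\<le>k. bcoeff P i j * z ^ i * w ^ j)"
    by (simp add: sum_distrib_left sum_distrib_right mult_ac)
  finally show ?thesis .
qed

lemma eval2_slash:
  "eval2 (slash k P (a, b, c, e)) z w =
     (\<Sum>i\<le>k. \<Sum>j\<le>k. bcoeff P i j * (a * z + b) ^ i * (c * z + e) ^ (k - i)
        * (cnj a * w + cnj b) ^ j * (cnj c * w + cnj e) ^ (k - j))"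
  by (simp add: eval2_sum)

lemma eval2_slash_frac:
  assumes "P \<in> Vkk k" and nz: "c * z + e \<noteq> 0" "cnj c * w + cnj e \<noteq> 0"
  shows "eval2 (slash k P (a, b, c, e)) z w =
     (c * z + e) ^ k * (cnj c * w + cnj e) ^ k *
       eval2 P ((a * z + b) / (c * z + e)) ((cnj a * w + cnj b) / (cnj c * w + cnj e))"
proof -
  let ?u = "c * z + e" and ?v = "cnj c * w + cnj e"
  have pu: "(a * z + b) ^ i * ?u ^ (k - i) = ?u ^ k * ((a * z + b) / ?u) ^ i" if "i \<le> k" for i
  proof -
    have "?u ^ k = ?u ^ i * ?u ^ (k - i)" using that by (simp add: power_add[symmetric])
    then show ?thesis using nz by (simp add: power_divide field_simps)
  qed
  have pv: "(cnj a * w + cnj b) ^ j * ?v ^ (k - j) = ?v ^ k * ((cnj a * w + cnj b) / ?v) ^ j" if "j \<le> k" for j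
  proof -
    have "?v ^ k = ?v ^ j * ?v ^ (k - j)" using that by (simp add: power_add[symmetric])
    then show ?thesis using nz by (simp add: power_divide field_simps)
  qed
  have "eval2 (slash k P (a, b, c, e)) z w =
     (\<Sum>i\<le>k. \<Sum>j\<le>k. bcoeff P i j * ((a * z + b) ^ i * ?u ^ (k - i))
        * ((cnj a * w + cnj b) ^ j * ?v ^ (k - j)))"
    unfolding eval2_slash by (simp add: mult.assoc)
  also have "\<dots> = (\<Sum>i\<le>k. \<Sum>j\<le>k. bcoeff P i j * (?u ^ k * ((a * z + b) / ?u) ^ i)
        * (?v ^ k * ((cnj a * w + cnj b) / ?v) ^ j))"
    by (intro sum.cong refl) (simp add: pu pv)
  also have "\<dots> = ?u ^ k * ?v ^ k * (\<Sum>i\<le>k. \<Sum>j\<le>k. bcoeff P i j * ((a * z + b) / ?u) ^ i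
        * ((cnj a * w + cnj b) / ?v) ^ j)"
    by (simp add: sum_distrib_left algebra_simps)
  also have "\<dots> = ?u ^ k * ?v ^ k *
       eval2 P ((a * z + b) / ?u) ((cnj a * w + cnj b) / ?v)"
    by (simp add: eval2_expand[OF assms(1)])
  finally show ?thesis .
qed

lemma slash_Imat: "P \<in> Vkk k \<Longrightarrow> slash k P Imat = P"
  by (rule eval2_inj) (simp add: Imat_def eval2_sum eval2_expand)

lemma slash_zero [simp]: "slash k 0 g = 0"
  by (cases g) (simp add: bcoeff_def cst_def)

lemma bcoeff_add: "bcoeff (P + R) i j = bcoeff P i j + bcoeff R i j"
  by (simp add: bcoeff_def)

lemma cst_add: "cst (x + y) = cst x + cst y"
  by (simp add: cst_def)

lemma slash_add: "slash k (P + R) g = slash k P g + slash k R g"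
  by (cases g) (simp add: bcoeff_add cst_add distrib_right sum.distrib)

lemma slash_sum: "slash k (sum F S) g = (\<Sum>x\<in>S. slash k (F x) g)"
  by (induction S rule: infinite_finite_induct) (auto simp: slash_add)

lemma bcoeff_minus: "bcoeff (- P) i j = - bcoeff P i j"
  by (simp add: bcoeff_def)

lemma cst_minus: "cst (- x) = - cst x"
  by (simp add: cst_def)

lemma slash_minus: "slash k (- P) g = - slash k P g"
  by (cases g) (simp add: bcoeff_minus cst_minus sum_negf)



definition bideg :: "bipoly \<Rightarrow> nat \<Rightarrow> nat \<Rightarrow> bool" where
  "bideg P m n \<longleftrightarrow> (\<forall>i j. (m < i \<or> n < j) \<longrightarrow> bcoeff P i j = 0)"

lemma Vkk_bideg: "P \<in> Vkk k \<longleftrightarrow> bideg P k k"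
  by (simp add: Vkk_def bideg_def)

lemma bideg_mono: "bideg P m n \<Longrightarrow> m \<le> m' \<Longrightarrow> n \<le> n' \<Longrightarrow> bideg P m' n'"
  by (auto simp: bideg_def)

lemma bideg_add: "bideg P m n \<Longrightarrow> bideg R m n \<Longrightarrow> bideg (P + R) m n"
  by (auto simp: bideg_def bcoeff_def)

lemma bideg_0: "bideg 0 m n"
  by (auto simp: bideg_def bcoeff_def)

lemma bideg_sum: "(\<And>x. x \<in> S \<Longrightarrow> bideg (F x) m n) \<Longrightarrow> bideg (sum F S) m n"
  by (induction S rule: infinite_finite_induct) (auto intro: bideg_add bideg_0)

lemma bideg_coeff_deg: "bideg P m n \<Longrightarrow> degree (coeff P i) \<le> n"
  by (rule degree_le) (auto simp: bideg_def bcoeff_def)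

lemma bideg_coeff_zero: "bideg P m n \<Longrightarrow> m < i \<Longrightarrow> coeff P i = 0"
  by (rule poly_eqI) (auto simp: bideg_def bcoeff_def)

lemma bideg_mult:
  assumes "bideg P m n" "bideg R m' n'"
  shows "bideg (P * R) (m + m') (n + n')"
  unfolding bideg_def
proof (intro allI impI)
  fix i j assume h: "m + m' < i \<or> n + n' < j"
  have "coeff (P * R) i = (\<Sum>l\<le>i. coeff P l * coeff R (i - l))"
    by (rule coeff_mult)
  also have "coeff \<dots> j = 0"
  proof (cases "m + m' < i")
    case True
    have "coeff P l * coeff R (i - l) = 0" for l
      using bideg_coeff_zero[OF assms(1), of l] bideg_coeff_zero[OF assms(2), of "i - l"] True
      by (cases "m < l") auto
    then have "(\<Sum>l\<le>i. coeff P l * coeff R (i - l)) = 0" by (intro sum.neutral) auto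
    then show ?thesis by simp
  next
    case False
    then have j: "n + n' < j" using h by auto
    have "coeff (coeff P l * coeff R (i - l)) j = 0" for l
    proof -
      have "degree (coeff P l * coeff R (i - l)) \<le> n + n'"
        using degree_mult_le[of "coeff P l" "coeff R (i - l)"]
          bideg_coeff_deg[OF assms(1), of l] bideg_coeff_deg[OF assms(2), of "i - l"] by linarith
      then show ?thesis using j by (simp add: coeff_eq_0)
    qed
    then show ?thesis by (simp add: coeff_sum)
  qed
  finally show "bcoeff (P * R) i j = 0" by (simp add: bcoeff_def)
qed

lemma bideg_1: "bideg 1 0 0"
  by (auto simp: bideg_def bcoeff_def coeff_1)

lemma bideg_power: "bideg P m n \<Longrightarrow> bideg (P ^ k) (k * m) (k * n)"
proof (induction k)
  case 0 then show ?case by (simp add: bideg_1)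
next
  case (Suc k)
  then show ?case using bideg_mult[OF Suc.prems Suc.IH[OF Suc.prems]] by simp
qed

lemma bideg_cst: "bideg (cst c) 0 0"
  by (auto simp: bideg_def bcoeff_def cst_def coeff_pCons split: nat.splits)

lemma bideg_Zv: "bideg Zv 1 0"
  by (auto simp: bideg_def bcoeff_def Zv_def coeff_pCons coeff_1 split: nat.splits)

lemma bideg_Wv: "bideg Wv 0 1"
  by (auto simp: bideg_def bcoeff_def Wv_def coeff_pCons split: nat.splits)

definition qpoly :: "complex \<times> complex \<times> complex \<Rightarrow> bipoly" where
  "qpoly Q = (case Q of (A, B, C) \<Rightarrow> cst A * Zv * Wv + cst B * Zv + cst (cnj B) * Wv + cst C)"

lemma bideg_qpoly: "bideg (qpoly Q) 1 1"
proof -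
  obtain A B C where Q: "Q = (A, B, C)" by (cases Q) auto
  have a: "bideg (cst A * Zv * Wv) 1 1"
    using bideg_mult[OF bideg_mult[OF bideg_cst bideg_Zv] bideg_Wv] by simp
  have b: "bideg (cst B * Zv) 1 1"
    using bideg_mult[OF bideg_cst bideg_Zv] by (rule bideg_mono) auto
  have c: "bideg (cst (cnj B) * Wv) 1 1"
    using bideg_mult[OF bideg_cst bideg_Wv] by (rule bideg_mono) auto
  have d: "bideg (cst C) 1 1"
    using bideg_cst by (rule bideg_mono) auto
  show ?thesis unfolding Q qpoly_def prod.case
    by (intro bideg_add a b c d)
qed

lemma qpoly_pow_Vkk: "qpoly Q ^ k \<in> Vkk k"
  using bideg_power[OF bideg_qpoly, where k=k] by (simp add: Vkk_bideg)

lemma eval2_qpoly: "eval2 (qpoly (A, B, C)) z w = A * z * w + B * z + cnj B * w + C"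
  by (simp add: qpoly_def)



lemma gi_iff: "z \<in> gauss_ints \<longleftrightarrow> Re z \<in> \<int> \<and> Im z \<in> \<int>"
  by (simp add: gauss_ints_def)

lemma gi_add [intro]: "x \<in> gauss_ints \<Longrightarrow> y \<in> gauss_ints \<Longrightarrow> x + y \<in> gauss_ints"
  by (simp add: gi_iff)
lemma gi_diff [intro]: "x \<in> gauss_ints \<Longrightarrow> y \<in> gauss_ints \<Longrightarrow> x - y \<in> gauss_ints"
  by (simp add: gi_iff)
lemma gi_uminus [intro]: "x \<in> gauss_ints \<Longrightarrow> - x \<in> gauss_ints"
  by (simp add: gi_iff)
lemma gi_mult [intro]: "x \<in> gauss_ints \<Longrightarrow> y \<in> gauss_ints \<Longrightarrow> x * y \<in> gauss_ints"
  by (simp add: gi_iff)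
lemma gi_cnj [intro]: "x \<in> gauss_ints \<Longrightarrow> cnj x \<in> gauss_ints"
  by (simp add: gi_iff)
lemma gi_0 [simp, intro]: "0 \<in> gauss_ints" by (simp add: gi_iff)
lemma gi_1 [simp, intro]: "1 \<in> gauss_ints" by (simp add: gi_iff)
lemma gi_ii [simp, intro]: "\<i> \<in> gauss_ints" by (simp add: gi_iff)
lemma gi_Ints [intro]: "x \<in> \<int> \<Longrightarrow> x \<in> gauss_ints"
  by (auto simp: gi_iff complex_is_Int_iff)
lemma gi_of_int [simp, intro]: "of_int n \<in> gauss_ints"
  by (simp add: gi_iff)
lemma gi_power [intro]: "x \<in> gauss_ints \<Longrightarrow> x ^ n \<in> gauss_ints"
  by (induction n) auto

lemma gi_real_Ints: "x \<in> gauss_ints \<Longrightarrow> Im x = 0 \<Longrightarrow> x \<in> \<int>"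
  by (auto simp: gi_iff complex_is_Int_iff elim!: Ints_cases)

lemma gi_norm_Ints: "x \<in> gauss_ints \<Longrightarrow> x * cnj x \<in> \<int>"
  by (rule gi_real_Ints) auto

lemma gi_tr_Ints: "x \<in> gauss_ints \<Longrightarrow> x + cnj x \<in> \<int>"
  by (rule gi_real_Ints) auto

lemma Ints_cnj: "x \<in> (\<int> :: complex set) \<Longrightarrow> cnj x = x"
  by (auto elim!: Ints_cases)

lemma gauss_div:
  assumes a: "a \<in> gauss_ints" and c: "c \<in> gauss_ints" and "c \<noteq> 0"
  shows "\<exists>q \<in> gauss_ints. cmod (a - q * c) < cmod c"
proof -
  define x where "x = a / c"
  define q where "q = Complex (of_int (round (Re x))) (of_int (round (Im x)))"
  have q: "q \<in> gauss_ints" by (simp add: q_def gi_iff)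
  have r1: "\<bar>Re (x - q)\<bar> \<le> 1/2" "\<bar>Im (x - q)\<bar> \<le> 1/2"
    using of_int_round_abs_le[of "Re x"] of_int_round_abs_le[of "Im x"]
    by (auto simp: q_def abs_minus_commute)
  have sq: "y\<^sup>2 \<le> 1/4" if "\<bar>y\<bar> \<le> 1/2" for y :: real
  proof -
    have "\<bar>y\<bar>^2 \<le> (1/2)^2" by (rule power_mono) (use that in auto)
    then show ?thesis by (simp add: power2_eq_square)
  qed
  have "(Re (x - q))\<^sup>2 \<le> 1/4" "(Im (x - q))\<^sup>2 \<le> 1/4"
    using sq r1 by auto
  then have "cmod (x - q) < 1"
    by (simp add: cmod_def)
  moreover have "a - q * c = c * (x - q)" using \<open>c \<noteq> 0\<close> by (simp add: x_def field_simps)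
  ultimately have "cmod (a - q * c) < cmod c"
    using \<open>c \<noteq> 0\<close> by (simp add: norm_mult)
  with q show ?thesis by blast
qed



definition gnorm :: "complex \<Rightarrow> nat" where "gnorm z = nat \<lfloor>(cmod z)\<^sup>2\<rfloor>"

lemma gnorm_real: assumes "z \<in> gauss_ints" shows "real (gnorm z) = (cmod z)\<^sup>2"
proof -
  obtain a b where ab: "Re z = of_int a" "Im z = of_int b" using assms by (auto simp: gi_iff elim!: Ints_cases)
  have "(cmod z)\<^sup>2 = of_int (a\<^sup>2 + b\<^sup>2)" by (simp add: cmod_power2 ab)
  then show ?thesis by (simp add: gnorm_def)
qed

lemma gnorm_less: "z \<in> gauss_ints \<Longrightarrow> y \<in> gauss_ints \<Longrightarrow> cmod z < cmod y \<Longrightarrow> gnorm z < gnorm y"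
proof -
  assume h: "z \<in> gauss_ints" "y \<in> gauss_ints" "cmod z < cmod y"
  have "(cmod z)\<^sup>2 < (cmod y)\<^sup>2"
    using power_strict_mono[of "cmod z" "cmod y" 2] h(3) by simp
  then have "real (gnorm z) < real (gnorm y)" using gnorm_real[OF h(1)] gnorm_real[OF h(2)] by simp
  then show ?thesis by simp
qed

lemma descent_identity:
  fixes t q r D :: complex
  assumes "cnj D = D"
  shows "(t * cnj r + (t * cnj t - D) * cnj q) * cnj (t * cnj r + (t * cnj t - D) * cnj q) - D * (cnj r * r)
     = (t * cnj t - D) * ((t * q + r) * cnj (t * q + r) - D * (q * cnj q))"
  using assms by (simp add: algebra_simps)

lemma norm_descent_aux:
  "\<forall>M q. M \<in> gauss_ints \<longrightarrow> q \<in> gauss_ints \<longrightarrow> q \<noteq> 0 \<longrightarrow> gnorm q = n \<longrightarrow>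
     M * cnj M = of_int \<Delta> * (q * cnj q) \<longrightarrow> (\<exists>\<beta>\<in>gauss_ints. of_int \<Delta> = \<beta> * cnj \<beta>)"
proof (induction n rule: less_induct)
  case (less n)
  show ?case
  proof (intro allI impI)
    fix M q assume M: "M \<in> gauss_ints" and q: "q \<in> gauss_ints" "q \<noteq> 0" "gnorm q = n"
      and eq: "M * cnj M = of_int \<Delta> * (q * cnj q)"
    obtain t where t: "t \<in> gauss_ints" "cmod (M - t * q) < cmod q"
      using gauss_div[OF M q(1,2)] by blast
    define r where "r = M - t * q"
    have Mr: "M = t * q + r" by (simp add: r_def)
    have rG: "r \<in> gauss_ints" using M q t by (auto simp: r_def)
    show "\<exists>\<beta>\<in>gauss_ints. of_int \<Delta> = \<beta> * cnj \<beta>"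
    proof (cases "r = 0")
      case True
      then have "(t * cnj t) * (q * cnj q) = of_int \<Delta> * (q * cnj q)"
        using eq Mr by (simp add: algebra_simps)
      moreover have "q * cnj q \<noteq> 0" using q by simp
      ultimately have "of_int \<Delta> = t * cnj t" by simp
      with t show ?thesis by blast
    next
      case False
      define M' where "M' = t * cnj r + (t * cnj t - of_int \<Delta>) * cnj q"
      have M'G: "M' \<in> gauss_ints" unfolding M'_def by (intro gi_add gi_mult gi_diff gi_cnj gi_of_int t(1) q(1) rG)
      have "M' * cnj M' - of_int \<Delta> * (cnj r * cnj (cnj r)) = 0"
        using descent_identity[of "of_int \<Delta>" t r q] eq Mr by (simp add: M'_def)
      then have eq': "M' * cnj M' = of_int \<Delta> * (cnj r * cnj (cnj r))" by simp
      have lt: "gnorm (cnj r) < n"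
      proof -
        have "cmod (cnj r) < cmod q" using t(2) by (simp only: complex_mod_cnj r_def)
        then show ?thesis using gnorm_less[OF gi_cnj[OF rG] q(1)] q(3) by simp
      qed
      show ?thesis
        using less.IH[OF lt] M'G gi_cnj[OF rG] False eq' by auto
    qed
  qed
qed

lemma norm_descent:
  "M \<in> gauss_ints \<Longrightarrow> q \<in> gauss_ints \<Longrightarrow> q \<noteq> 0 \<Longrightarrow>
     M * cnj M = of_int \<Delta> * (q * cnj q) \<Longrightarrow> (\<exists>\<beta>\<in>gauss_ints. of_int \<Delta> = \<beta> * cnj \<beta>)"
  using norm_descent_aux by blast



type_synonym form = "complex \<times> complex \<times> complex"

definition Xf :: "int \<Rightarrow> form set" where
  "Xf \<Delta> = {(A, B, C). A \<in> \<int> \<and> B \<in> gauss_ints \<and> C \<in> \<int> \<and> B * cnj B - A * C = of_int \<Delta>}"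

fun Qval :: "form \<Rightarrow> complex \<times> complex \<Rightarrow> complex" where
  "Qval (A, B, C) (p, q) = A * p * cnj p + B * p * cnj q + cnj B * cnj p * q + C * q * cnj q"

fun qact :: "form \<Rightarrow> mat2 \<Rightarrow> form" where
  "qact (A, B, C) (a, b, c, e) =
     (Qval (A, B, C) (a, c), A * a * cnj b + B * a * cnj e + cnj B * c * cnj b + C * c * cnj e,
      Qval (A, B, C) (b, e))"

fun matvec :: "mat2 \<Rightarrow> complex \<times> complex \<Rightarrow> complex \<times> complex" where
  "matvec (a, b, c, e) (p, q) = (a * p + b * q, c * p + e * q)"

fun qneg :: "form \<Rightarrow> form" where
  "qneg (A, B, C) = (- A, - B, - C)"

lemma Qval_fact:
  assumes "cnj A = A" "cnj C = C"
  shows "Qval (qact (A, B, C) g) v = Qval (A, B, C) (matvec g v)"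
  using assms by (cases g; cases v) (simp add: algebra_simps)

lemma fact_mmul:
  assumes "cnj A = A" "cnj C = C"
  shows "qact (qact (A, B, C) g1) g2 = qact (A, B, C) (mmul g1 g2)"
  using assms by (cases g1; cases g2) (simp add: algebra_simps)

lemma fact_I: "qact Q Imat = Q"
  by (cases Q) (simp add: Imat_def)

lemma disc_identity:
  assumes "cnj A = A" "cnj C = C"
  shows "(A * a * cnj b + B * a * cnj e + cnj B * c * cnj b + C * c * cnj e) *
         cnj (A * a * cnj b + B * a * cnj e + cnj B * c * cnj b + C * c * cnj e)
       - Qval (A, B, C) (a, c) * Qval (A, B, C) (b, e)
       = (a * e - b * c) * cnj (a * e - b * c) * (B * cnj B - A * C)"
  using assms by (simp add: algebra_simps)



lemma Xf_D: "(A, B, C) \<in> Xf \<Delta> \<Longrightarrow> A \<in> \<int> \<and> B \<in> gauss_ints \<and> C \<in> \<int> \<and> B * cnj B - A * C = of_int \<Delta>"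
  by (simp add: Xf_def)

lemma Xf_real: "(A, B, C) \<in> Xf \<Delta> \<Longrightarrow> cnj A = A \<and> cnj C = C"
  by (auto simp: Xf_def Ints_cnj)

lemma Qval_Ints:
  assumes "(A, B, C) \<in> Xf \<Delta>" "p \<in> gauss_ints" "q \<in> gauss_ints"
  shows "Qval (A, B, C) (p, q) \<in> \<int>"
proof -
  have X: "A \<in> \<int>" "B \<in> gauss_ints" "C \<in> \<int>" using Xf_D[OF assms(1)] by auto
  have "Qval (A, B, C) (p, q) = A * (p * cnj p) + (B * p * cnj q + cnj (B * p * cnj q)) + C * (q * cnj q)"
    by (simp add: algebra_simps)
  also have "\<dots> \<in> \<int>"
    using X assms(2,3) by (intro Ints_add Ints_mult gi_norm_Ints gi_tr_Ints gi_mult gi_cnj) auto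
  finally show ?thesis .
qed

lemma Qval_real: "(A, B, C) \<in> Xf \<Delta> \<Longrightarrow> Im (Qval (A, B, C) v) = 0"
  by (cases v) (auto simp: Xf_def complex_is_Int_iff algebra_simps)

lemma fact_Xf:
  assumes Q: "(A, B, C) \<in> Xf \<Delta>" and g: "g \<in> SL2Zi"
  shows "qact (A, B, C) g \<in> Xf \<Delta>"
proof -
  obtain a b c e where ge: "g = (a, b, c, e)" by (cases g) auto
  have G: "a \<in> gauss_ints" "b \<in> gauss_ints" "c \<in> gauss_ints" "e \<in> gauss_ints" "a * e - b * c = 1"
    using g by (auto simp: SL2Zi_def ge)
  have X: "A \<in> \<int>" "B \<in> gauss_ints" "C \<in> \<int>" "B * cnj B - A * C = of_int \<Delta>" using Xf_D[OF Q] by auto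
  have r: "cnj A = A" "cnj C = C" using Xf_real[OF Q] by auto
  have "A * a * cnj b + B * a * cnj e + cnj B * c * cnj b + C * c * cnj e \<in> gauss_ints"
    using G X gi_Ints[OF X(1)] gi_Ints[OF X(3)] by (intro gi_add gi_mult gi_cnj) auto
  moreover have "Qval (A, B, C) (a, c) \<in> \<int>" "Qval (A, B, C) (b, e) \<in> \<int>"
    using Qval_Ints[OF Q] G by auto
  moreover have "(A * a * cnj b + B * a * cnj e + cnj B * c * cnj b + C * c * cnj e) *
         cnj (A * a * cnj b + B * a * cnj e + cnj B * c * cnj b + C * c * cnj e)
       - Qval (A, B, C) (a, c) * Qval (A, B, C) (b, e) = of_int \<Delta>"
    unfolding disc_identity[OF r] G(5) X(4) by simp
  ultimately show ?thesis unfolding ge qact.simps[of A B C] Xf_def by simp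
qed

lemma Xf_A_nz:
  assumes "(A, B, C) \<in> Xf \<Delta>" "\<not> (\<exists>\<beta> \<in> gauss_ints. of_int \<Delta> = \<beta> * cnj \<beta>)"
  shows "A \<noteq> 0"
  using assms by (auto simp: Xf_def)

lemma key_identity:
  assumes "(A, B, C) \<in> Xf \<Delta>"
  shows "A * Qval (A, B, C) (p, q) = (A * p + cnj B * q) * cnj (A * p + cnj B * q) - of_int \<Delta> * (q * cnj q)"
proof -
  have r: "cnj A = A" and d: "B * cnj B - A * C = of_int \<Delta>" using Xf_real[OF assms] Xf_D[OF assms] by auto
  have "(A * p + cnj B * q) * cnj (A * p + cnj B * q) - of_int \<Delta> * (q * cnj q)
      = (A * p + cnj B * q) * cnj (A * p + cnj B * q) - (B * cnj B - A * C) * (q * cnj q)"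
    by (simp add: d)
  also have "\<dots> = A * Qval (A, B, C) (p, q)" using r by (simp add: algebra_simps)
  finally show ?thesis by simp
qed

lemma Qval_nz:
  assumes Q: "(A, B, C) \<in> Xf \<Delta>" and nn: "\<not> (\<exists>\<beta> \<in> gauss_ints. of_int \<Delta> = \<beta> * cnj \<beta>)"
    and p: "p \<in> gauss_ints" and q: "q \<in> gauss_ints" and nz: "(p, q) \<noteq> (0, 0)"
  shows "Qval (A, B, C) (p, q) \<noteq> 0"
proof
  assume z: "Qval (A, B, C) (p, q) = 0"
  have A0: "A \<noteq> 0" by (rule Xf_A_nz[OF Q nn])
  show False
  proof (cases "q = 0")
    case True
    then have "p \<noteq> 0" using nz by auto
    then show False using z A0 True by simp
  next
    case False
    let ?M = "A * p + cnj B * q"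
    have "?M * cnj ?M = of_int \<Delta> * (q * cnj q)"
      using key_identity[OF Q, of p q] z by simp
    moreover have "?M \<in> gauss_ints" using Xf_D[OF Q] p q gi_Ints[of A] by (intro gi_add gi_mult gi_cnj) auto
    ultimately show False using norm_descent[OF _ q False] nn by blast
  qed
qed

lemma qneg_Xf: "Q \<in> Xf \<Delta> \<Longrightarrow> qneg Q \<in> Xf \<Delta>"
  by (cases Q) (auto simp: Xf_def)

lemma Qval_qneg: "Qval (qneg Q) v = - Qval Q v"
  by (cases Q; cases v) (simp add: algebra_simps)

lemma qneg_qneg: "qneg (qneg Q) = Q"
  by (cases Q) simp

lemma qpoly_qneg: "qpoly (qneg Q) = - qpoly Q"
  by (cases Q) (simp add: qpoly_def cst_minus algebra_simps)



definition Sep :: "int \<Rightarrow> complex \<times> complex \<Rightarrow> complex \<times> complex \<Rightarrow> form set" where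
  "Sep \<Delta> u v = {Q \<in> Xf \<Delta>. 0 < Re (Qval Q u) \<and> Re (Qval Q v) < 0}"

lemma finite_gi_ball: "finite {B \<in> gauss_ints. cmod B \<le> R}"
proof -
  define K where "K = \<lceil>R\<rceil>"
  have "{B \<in> gauss_ints. cmod B \<le> R} \<subseteq> (\<lambda>(x, y). Complex (of_int x) (of_int y)) ` ({-K..K} \<times> {-K..K})"
  proof
    fix B assume B: "B \<in> {B \<in> gauss_ints. cmod B \<le> R}"
    obtain x y where xy: "Re B = of_int x" "Im B = of_int y" using B by (auto simp: gi_iff elim!: Ints_cases)
    have "\<bar>Re B\<bar> \<le> R" "\<bar>Im B\<bar> \<le> R" using B abs_Re_le_cmod[of B] abs_Im_le_cmod[of B] by auto
    then have "\<bar>x\<bar> \<le> K" "\<bar>y\<bar> \<le> K" unfolding K_def using xy by (auto simp: le_ceiling_iff)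
    moreover have "B = Complex (of_int x) (of_int y)" using xy by (simp add: complex_eq_iff)
    ultimately show "B \<in> (\<lambda>(x, y). Complex (of_int x) (of_int y)) ` ({-K..K} \<times> {-K..K})"
      by (auto simp: abs_le_iff)
  qed
  then show ?thesis by (rule finite_subset) auto
qed

lemma Sep_finite:
  assumes p: "p \<in> gauss_ints" and q: "q \<in> gauss_ints"
  shows "finite (Sep \<Delta> (1, 0) (p, q))"
proof (cases "q = 0")
  case True
  have "Sep \<Delta> (1, 0) (p, q) = {}"
  proof -
    have False if QS: "Q \<in> Sep \<Delta> (1, 0) (p, q)" for Q
    proof -
    obtain A B C where Qe: "Q = (A, B, C)" by (cases Q) auto
    from QS have "0 < Re A" "Re (A * p * cnj p) < 0" "cnj A = A" using True Xf_real[of A B C \<Delta>]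
      by (auto simp: Sep_def Qe)
    moreover have "A * p * cnj p = A * of_real ((cmod p)\<^sup>2)" by (subst complex_norm_square) (simp add: mult.assoc)
    moreover have "Im A = 0" using Qe QS by (auto simp: Sep_def Xf_def complex_is_Int_iff)
    ultimately have "Re A * (cmod p)\<^sup>2 < 0" "0 < Re A" by simp_all
    then show False using mult_nonneg_nonneg[of "Re A" "(cmod p)\<^sup>2"] zero_le_power2[of "cmod p"] by linarith
  qed
  then show ?thesis by blast
  qed
  then show ?thesis by simp
next
  case False
  define R where "R = (sqrt (of_int \<Delta> * (cmod q)\<^sup>2) + of_int \<Delta> * (cmod q)\<^sup>2 * cmod p) / cmod q"
  define N where "N = \<lfloor>of_int \<Delta> * (cmod q)\<^sup>2\<rfloor>"
  have "Sep \<Delta> (1, 0) (p, q) \<subseteq>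
    (\<lambda>(a, B). (of_int a, B, (B * cnj B - of_int \<Delta>) / of_int a)) ` ({1..N} \<times> {B \<in> gauss_ints. cmod B \<le> R})"
  proof
    fix Q assume QS: "Q \<in> Sep \<Delta> (1, 0) (p, q)"
    obtain A B C where Qe: "Q = (A, B, C)" by (cases Q) auto
    have QX: "(A, B, C) \<in> Xf \<Delta>" using QS by (simp add: Sep_def Qe)
    have X: "A \<in> \<int>" "B \<in> gauss_ints" "C \<in> \<int>" "B * cnj B - A * C = of_int \<Delta>" using Xf_D[OF QX] by auto
    obtain a where a: "A = of_int a" using X(1) by (auto elim!: Ints_cases)
    have apos: "0 < a" using QS by (simp add: Sep_def Qe a)
    obtain s where s: "Qval (A, B, C) (p, q) = of_int s" using Qval_Ints[OF QX p q] by (auto elim!: Ints_cases)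
    have sneg: "s < 0" using QS by (simp add: Sep_def Qe s del: Qval.simps)
    let ?M = "A * p + cnj B * q"
    have "of_int a * of_int s = ?M * cnj ?M - of_int \<Delta> * (q * cnj q)"
      using key_identity[OF QX, of p q] unfolding s by (simp add: a)
    also have "\<dots> = of_real ((cmod ?M)\<^sup>2 - of_int \<Delta> * (cmod q)\<^sup>2)"
      by (simp only: of_real_diff of_real_mult complex_norm_square of_real_of_int_eq)
    finally have "Re (of_int a * of_int s) = Re (of_real ((cmod ?M)\<^sup>2 - of_int \<Delta> * (cmod q)\<^sup>2))"
      by (rule arg_cong)
    then have "of_int (a * s) = (cmod ?M)\<^sup>2 - of_int \<Delta> * (cmod q)\<^sup>2"
      by (simp only: Re_complex_of_real of_int_mult) simp
    moreover have "real_of_int (a * s) \<le> - a"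
    proof -
      have "a * s \<le> a * (-1)" using apos sneg by (intro mult_left_mono) auto
      then show ?thesis by linarith
    qed
    ultimately have M2: "(cmod ?M)\<^sup>2 \<le> of_int \<Delta> * (cmod q)\<^sup>2" and aN: "of_int a \<le> of_int \<Delta> * (cmod q)\<^sup>2"
      using apos zero_le_power2[of "cmod ?M"] by linarith+
    have a_le: "a \<le> N" using aN by (simp add: N_def le_floor_iff)
    have Mle: "cmod ?M \<le> sqrt (of_int \<Delta> * (cmod q)\<^sup>2)"
      using M2 by (rule real_le_rsqrt)
    have "cmod B * cmod q = cmod (?M - A * p)" by (simp add: norm_mult)
    also have "\<dots> \<le> cmod ?M + cmod (A * p)" by (rule norm_triangle_ineq4)
    also have "\<dots> \<le> sqrt (of_int \<Delta> * (cmod q)\<^sup>2) + of_int \<Delta> * (cmod q)\<^sup>2 * cmod p"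
    proof -
      have "cmod (A * p) = of_int a * cmod p" using apos by (simp add: a norm_mult)
      also have "\<dots> \<le> of_int \<Delta> * (cmod q)\<^sup>2 * cmod p" by (rule mult_right_mono[OF aN]) auto
      finally show ?thesis using Mle by linarith
    qed
    finally have "cmod B \<le> R" using False by (simp add: R_def pos_le_divide_eq)
    moreover have Ce: "C = (B * cnj B - of_int \<Delta>) / of_int a"
    proof -
      have "B * cnj B - of_int a * C = of_int \<Delta>" using X(4) by (simp add: a)
      then have "of_int a * C = B * cnj B - of_int \<Delta>" by (simp add: algebra_simps)
      then show ?thesis using apos by (simp add: eq_divide_eq mult.commute)
    qed
    ultimately have mem: "(a, B) \<in> {1..N} \<times> {B \<in> gauss_ints. cmod B \<le> R}"
      using apos a_le X(2) by simp
    have "Q = (\<lambda>(a, B). (of_int a, B, (B * cnj B - of_int \<Delta>) / of_int a)) (a, B)"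
      by (simp add: Qe a Ce)
    then show "Q \<in> (\<lambda>(a, B). (of_int a, B, (B * cnj B - of_int \<Delta>) / of_int a)) ` ({1..N} \<times> {B \<in> gauss_ints. cmod B \<le> R})"
      using mem by (rule image_eqI)
  qed
  moreover have "finite ({1..N} \<times> {B \<in> gauss_ints. cmod B \<le> R})"
    using finite_gi_ball by auto
  ultimately show ?thesis using finite_subset by blast
qed



lemma Re_Qval_nz:
  assumes Q: "Q \<in> Xf \<Delta>" and nn: "\<not> (\<exists>\<beta> \<in> gauss_ints. of_int \<Delta> = \<beta> * cnj \<beta>)"
    and p: "p \<in> gauss_ints" and q: "q \<in> gauss_ints" and nz: "(p, q) \<noteq> (0, 0)"
  shows "Re (Qval Q (p, q)) \<noteq> 0"
proof -
  obtain A B C where Qe: "Q = (A, B, C)" by (cases Q) auto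
  have "Qval Q (p, q) \<noteq> 0" using Qval_nz[OF Q[unfolded Qe] nn p q nz] by (simp add: Qe)
  moreover have "Im (Qval Q (p, q)) = 0" using Qval_real[OF Q[unfolded Qe], of "(p, q)"] by (simp add: Qe del: Qval.simps)
  ultimately show ?thesis by (simp add: complex_eq_iff)
qed

lemma sep_add:
  assumes nzv: "\<And>Q v. Q \<in> Xf \<Delta> \<Longrightarrow> v \<in> {u, b, c} \<Longrightarrow> Re (Qval Q v) \<noteq> 0"
    and fin: "finite (Sep \<Delta> u b)" "finite (Sep \<Delta> b c)" "finite (Sep \<Delta> u c)"
    and k: "odd k"
  shows "(\<Sum>Q\<in>Sep \<Delta> u c. qpoly Q ^ k) = (\<Sum>Q\<in>Sep \<Delta> u b. qpoly Q ^ k) + (\<Sum>Q\<in>Sep \<Delta> b c. qpoly Q ^ k)"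
proof -
  let ?h = "\<lambda>Q. qpoly Q ^ k"
  let ?v = "\<lambda>Q v. Re (Qval Q v)"
  have nu: "?v Q u \<noteq> 0" and nb: "?v Q b \<noteq> 0" and nc: "?v Q c \<noteq> 0" if "Q \<in> Xf \<Delta>" for Q
    using nzv[OF that] by auto
  have e1: "Sep \<Delta> u c \<inter> {Q. ?v Q b < 0} = Sep \<Delta> u b \<inter> {Q. ?v Q c < 0}"
    by (auto simp: Sep_def)
  have e2: "Sep \<Delta> u c - {Q. ?v Q b < 0} = Sep \<Delta> b c \<inter> {Q. 0 < ?v Q u}"
    using nb nu by (force simp: Sep_def)
  have e3: "Sep \<Delta> b c - {Q. 0 < ?v Q u} = qneg ` (Sep \<Delta> u b - {Q. ?v Q c < 0})"
  proof (intro equalityI subsetI)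
    fix Q assume Q: "Q \<in> Sep \<Delta> b c - {Q. 0 < ?v Q u}"
    then have "qneg Q \<in> Sep \<Delta> u b - {Q. ?v Q c < 0}"
      using nu[of Q] by (auto simp: Sep_def Qval_qneg qneg_Xf)
    moreover have "Q = qneg (qneg Q)" by (simp add: qneg_qneg)
    ultimately show "Q \<in> qneg ` (Sep \<Delta> u b - {Q. ?v Q c < 0})" by blast
  next
    fix Q assume "Q \<in> qneg ` (Sep \<Delta> u b - {Q. ?v Q c < 0})"
    then obtain Q0 where Q0: "Q0 \<in> Sep \<Delta> u b - {Q. ?v Q c < 0}" "Q = qneg Q0" by blast
    then show "Q \<in> Sep \<Delta> b c - {Q. 0 < ?v Q u}"
      using nc[of Q0] by (auto simp: Sep_def Qval_qneg qneg_Xf)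
  qed
  have injn: "inj_on qneg S" for S by (metis inj_onI qneg_qneg)
  have "(\<Sum>Q\<in>Sep \<Delta> b c - {Q. 0 < ?v Q u}. ?h Q) = (\<Sum>Q\<in>Sep \<Delta> u b - {Q. ?v Q c < 0}. ?h (qneg Q))"
    unfolding e3 by (rule sum.reindex[OF injn, unfolded comp_def])
  also have "\<dots> = - (\<Sum>Q\<in>Sep \<Delta> u b - {Q. ?v Q c < 0}. ?h Q)"
    using k by (simp add: qpoly_qneg sum_negf)
  finally have s3: "(\<Sum>Q\<in>Sep \<Delta> b c - {Q. 0 < ?v Q u}. ?h Q) = - (\<Sum>Q\<in>Sep \<Delta> u b - {Q. ?v Q c < 0}. ?h Q)" .
  have "(\<Sum>Q\<in>Sep \<Delta> u c. ?h Q) = (\<Sum>Q\<in>Sep \<Delta> u c \<inter> {Q. ?v Q b < 0}. ?h Q) + (\<Sum>Q\<in>Sep \<Delta> u c - {Q. ?v Q b < 0}. ?h Q)"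
    by (rule sum.Int_Diff[OF fin(3)])
  moreover have "(\<Sum>Q\<in>Sep \<Delta> u b. ?h Q) = (\<Sum>Q\<in>Sep \<Delta> u b \<inter> {Q. ?v Q c < 0}. ?h Q) + (\<Sum>Q\<in>Sep \<Delta> u b - {Q. ?v Q c < 0}. ?h Q)"
    by (rule sum.Int_Diff[OF fin(1)])
  moreover have "(\<Sum>Q\<in>Sep \<Delta> b c. ?h Q) = (\<Sum>Q\<in>Sep \<Delta> b c \<inter> {Q. 0 < ?v Q u}. ?h Q) + (\<Sum>Q\<in>Sep \<Delta> b c - {Q. 0 < ?v Q u}. ?h Q)"
    by (rule sum.Int_Diff[OF fin(2)])
  ultimately show ?thesis using e1 e2 s3 by simp
qed



lemma finite_lin_zero: "(c, e) \<noteq> (0, 0) \<Longrightarrow> finite {z :: complex. c * z + e = 0}"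
proof (cases "c = 0")
  case True
  assume "(c, e) \<noteq> (0, 0)"
  then show ?thesis using True by simp
next
  case False
  then have "{z. c * z + e = 0} = {- e / c}" by (auto simp: field_simps) (simp add: add_eq_0_iff)
  then show ?thesis by simp
qed

lemma frac_clear:
  fixes u v x y A B B' C :: complex
  assumes "u \<noteq> 0" "v \<noteq> 0"
  shows "u * v * (A * (x / u) * (y / v) + B * (x / u) + B' * (y / v) + C) = A * x * y + B * x * v + B' * u * y + C * u * v"
  using assms by (simp add: field_simps)

lemma slash_qpoly_pow:
  assumes r: "cnj A = A" "cnj C = C" and nz: "(c, e) \<noteq> (0, 0)"
  shows "slash k (qpoly (A, B, C) ^ k) (a, b, c, e) = qpoly (qact (A, B, C) (a, b, c, e)) ^ k"
proof (rule eval2_inj_exc[OF finite_lin_zero[OF nz] finite_lin_zero[of "cnj c" "cnj e"]])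
  show "(cnj c, cnj e) \<noteq> (0, 0)" using nz by auto
next
  fix z w assume z: "z \<notin> {z. c * z + e = 0}" and w: "w \<notin> {w. cnj c * w + cnj e = 0}"
  let ?u = "c * z + e" and ?v = "cnj c * w + cnj e"
  have u: "?u \<noteq> 0" and v: "?v \<noteq> 0" using z w by auto
  have "eval2 (slash k (qpoly (A, B, C) ^ k) (a, b, c, e)) z w
     = ?u ^ k * ?v ^ k * (A * ((a * z + b) / ?u) * ((cnj a * w + cnj b) / ?v) + B * ((a * z + b) / ?u)
         + cnj B * ((cnj a * w + cnj b) / ?v) + C) ^ k"
    by (subst eval2_slash_frac[OF qpoly_pow_Vkk u v]) (simp add: eval2_qpoly)
  also have "\<dots> = (?u * ?v * (A * ((a * z + b) / ?u) * ((cnj a * w + cnj b) / ?v) + B * ((a * z + b) / ?u)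
         + cnj B * ((cnj a * w + cnj b) / ?v) + C)) ^ k"
    by (simp add: power_mult_distrib)
  also have "?u * ?v * (A * ((a * z + b) / ?u) * ((cnj a * w + cnj b) / ?v) + B * ((a * z + b) / ?u)
         + cnj B * ((cnj a * w + cnj b) / ?v) + C)
      = A * (a * z + b) * (cnj a * w + cnj b) + B * (a * z + b) * ?v + cnj B * ?u * (cnj a * w + cnj b) + C * ?u * ?v"
    by (rule frac_clear[OF u v])
  also have "\<dots> = eval2 (qpoly (qact (A, B, C) (a, b, c, e))) z w"
    using r by (simp add: eval2_qpoly algebra_simps)
  finally show "eval2 (slash k (qpoly (A, B, C) ^ k) (a, b, c, e)) z w = eval2 (qpoly (qact (A, B, C) (a, b, c, e)) ^ k) z w"
    by simp
qed



fun minv :: "mat2 \<Rightarrow> mat2" where "minv (a, b, c, e) = (e, - b, - c, a)"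
fun vinv :: "mat2 \<Rightarrow> complex \<times> complex" where "vinv (a, b, c, e) = (e, - c)"

lemma SL2_mmul: assumes "g1 \<in> SL2Zi" "g2 \<in> SL2Zi" shows "mmul g1 g2 \<in> SL2Zi"
proof -
  obtain a b c e where g1: "g1 = (a, b, c, e)" by (cases g1) auto
  obtain a' b' c' e' where g2: "g2 = (a', b', c', e')" by (cases g2) auto
  have "(a * a' + b * c') * (c * b' + e * e') - (a * b' + b * e') * (c * a' + e * c')
      = (a * e - b * c) * (a' * e' - b' * c')" by (simp add: algebra_simps)
  then show ?thesis using assms by (auto simp: SL2Zi_def g1 g2)
qed

lemma SL2_minv: "g \<in> SL2Zi \<Longrightarrow> minv g \<in> SL2Zi"
  by (cases g) (auto simp: SL2Zi_def algebra_simps)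

lemma SL2_minv_l: "g \<in> SL2Zi \<Longrightarrow> mmul (minv g) g = Imat"
  by (cases g) (auto simp: SL2Zi_def Imat_def algebra_simps)

lemma SL2_minv_r: "g \<in> SL2Zi \<Longrightarrow> mmul g (minv g) = Imat"
  by (cases g) (auto simp: SL2Zi_def Imat_def algebra_simps)

lemma SL2_vinv: assumes "g \<in> SL2Zi" shows "fst (vinv g) \<in> gauss_ints" "snd (vinv g) \<in> gauss_ints"
  "vinv g \<noteq> (0, 0)"
  using assms by (cases g; auto simp: SL2Zi_def)+

lemma SL2_ce: "(a, b, c, e) \<in> SL2Zi \<Longrightarrow> (c, e) \<noteq> (0, 0)"
  by (auto simp: SL2Zi_def)

lemma matvec_vinv_self: "g \<in> SL2Zi \<Longrightarrow> matvec g (vinv g) = (1, 0)"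
  by (cases g) (auto simp: SL2Zi_def algebra_simps)

lemma matvec_minv_vinv: "matvec (minv g2) (vinv g1) = vinv (mmul g1 g2)"
  by (cases g1; cases g2) (simp add: algebra_simps)

lemma matvec_vinv_mmul: "g2 \<in> SL2Zi \<Longrightarrow> matvec g2 (vinv (mmul g1 g2)) = vinv g1"
proof -
  assume g: "g2 \<in> SL2Zi"
  obtain a b c e where g1: "g1 = (a, b, c, e)" by (cases g1) auto
  obtain a' b' c' e' where g2: "g2 = (a', b', c', e')" by (cases g2) auto
  have d: "a' * e' - b' * c' = 1" using g by (simp add: SL2Zi_def g2)
  have "a' * (c * b' + e * e') + b' * (- (c * a' + e * c')) = e * (a' * e' - b' * c')"
    "c' * (c * b' + e * e') + e' * (- (c * a' + e * c')) = - c * (a' * e' - b' * c')"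
    by (simp_all add: algebra_simps)
  then show ?thesis by (simp add: g1 g2 d)
qed

lemma matvec_minv_e1: "matvec (minv g) (1, 0) = vinv g"
  by (cases g) simp

lemma Qval_fact_X: "Q \<in> Xf \<Delta> \<Longrightarrow> Qval (qact Q g) v = Qval Q (matvec g v)"
  by (cases Q) (auto dest: Xf_real intro: Qval_fact)

lemma fact_mmul_X: "Q \<in> Xf \<Delta> \<Longrightarrow> qact (qact Q g1) g2 = qact Q (mmul g1 g2)"
  by (cases Q) (auto dest: Xf_real intro: fact_mmul)

lemma fact_Xf': "Q \<in> Xf \<Delta> \<Longrightarrow> g \<in> SL2Zi \<Longrightarrow> qact Q g \<in> Xf \<Delta>"
  by (cases Q) (auto intro: fact_Xf)

lemma Sep_transport:
  assumes g2: "g2 \<in> SL2Zi"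
  shows "(\<lambda>Q. qact Q g2) ` Sep \<Delta> (1, 0) (vinv g1) = Sep \<Delta> (vinv g2) (vinv (mmul g1 g2))"
proof (intro equalityI subsetI)
  fix Q' assume "Q' \<in> (\<lambda>Q. qact Q g2) ` Sep \<Delta> (1, 0) (vinv g1)"
  then obtain Q where Q: "Q \<in> Sep \<Delta> (1, 0) (vinv g1)" "Q' = qact Q g2" by blast
  have QX: "Q \<in> Xf \<Delta>" using Q by (simp add: Sep_def)
  show "Q' \<in> Sep \<Delta> (vinv g2) (vinv (mmul g1 g2))"
    using Q QX fact_Xf'[OF QX g2]
    by (simp add: Sep_def Qval_fact_X[OF QX] matvec_vinv_self[OF g2] matvec_vinv_mmul[OF g2] del: Qval.simps)
next
  fix Q' assume Q': "Q' \<in> Sep \<Delta> (vinv g2) (vinv (mmul g1 g2))"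
  have QX': "Q' \<in> Xf \<Delta>" using Q' by (simp add: Sep_def)
  define Q where "Q = qact Q' (minv g2)"
  have QX: "Q \<in> Xf \<Delta>" unfolding Q_def by (rule fact_Xf'[OF QX' SL2_minv[OF g2]])
  have "qact Q g2 = Q'"
    unfolding Q_def fact_mmul_X[OF QX'] SL2_minv_l[OF g2] fact_I ..
  moreover have "Q \<in> Sep \<Delta> (1, 0) (vinv g1)"
    using Q' QX by (simp add: Sep_def Q_def Qval_fact_X[OF QX'] matvec_minv_e1 matvec_minv_vinv del: Qval.simps)
  ultimately show "Q' \<in> (\<lambda>Q. qact Q g2) ` Sep \<Delta> (1, 0) (vinv g1)" by blast
qed

lemma fact_inj:
  assumes g: "g \<in> SL2Zi" shows "inj_on (\<lambda>Q. qact Q g) (Xf \<Delta>)"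
proof (rule inj_onI)
  fix Q R assume "Q \<in> Xf \<Delta>" "R \<in> Xf \<Delta>" "qact Q g = qact R g"
  then have "qact (qact Q g) (minv g) = qact (qact R g) (minv g)" by simp
  then show "Q = R" using \<open>Q \<in> Xf \<Delta>\<close> \<open>R \<in> Xf \<Delta>\<close>
    by (simp add: fact_mmul_X SL2_minv_r[OF g] fact_I)
qed

definition fcoc :: "nat \<Rightarrow> int \<Rightarrow> mat2 \<Rightarrow> bipoly" where
  "fcoc k \<Delta> g = (\<Sum>Q\<in>Sep \<Delta> (1, 0) (vinv g). qpoly Q ^ k)"

lemma Sep_fin_SL2: "g \<in> SL2Zi \<Longrightarrow> finite (Sep \<Delta> (1, 0) (vinv g))"
  using Sep_finite[of "fst (vinv g)" "snd (vinv g)" \<Delta>] SL2_vinv[of g] by simp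

lemma fcoc_cocycle:
  assumes g1: "g1 \<in> SL2Zi" and g2: "g2 \<in> SL2Zi" and k: "odd k"
    and nn: "\<not> (\<exists>\<beta> \<in> gauss_ints. of_int \<Delta> = \<beta> * cnj \<beta>)"
  shows "fcoc k \<Delta> (mmul g1 g2) = slash k (fcoc k \<Delta> g1) g2 + fcoc k \<Delta> g2"
proof -
  obtain a b c e where g2e: "g2 = (a, b, c, e)" by (cases g2) auto
  have ce: "(c, e) \<noteq> (0, 0)" using SL2_ce g2 g2e by blast
  have "slash k (fcoc k \<Delta> g1) g2 = (\<Sum>Q\<in>Sep \<Delta> (1, 0) (vinv g1). slash k (qpoly Q ^ k) g2)"
    by (simp add: fcoc_def slash_sum)
  also have "\<dots> = (\<Sum>Q\<in>Sep \<Delta> (1, 0) (vinv g1). qpoly (qact Q g2) ^ k)"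
  proof (rule sum.cong[OF refl])
    fix Q assume "Q \<in> Sep \<Delta> (1, 0) (vinv g1)"
    then have QX: "Q \<in> Xf \<Delta>" by (simp add: Sep_def)
    obtain A B C where Qe: "Q = (A, B, C)" by (cases Q) auto
    show "slash k (qpoly Q ^ k) g2 = qpoly (qact Q g2) ^ k"
      using Xf_real[OF QX[unfolded Qe]] unfolding Qe g2e by (intro slash_qpoly_pow ce) auto
  qed
  also have "\<dots> = (\<Sum>Q\<in>(\<lambda>Q. qact Q g2) ` Sep \<Delta> (1, 0) (vinv g1). qpoly Q ^ k)"
  proof -
    have "inj_on (\<lambda>Q. qact Q g2) (Sep \<Delta> (1, 0) (vinv g1))"
      using fact_inj[OF g2, of \<Delta>] by (rule inj_on_subset) (auto simp: Sep_def)
    then show ?thesis by (simp add: sum.reindex)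
  qed
  also have "\<dots> = (\<Sum>Q\<in>Sep \<Delta> (vinv g2) (vinv (mmul g1 g2)). qpoly Q ^ k)"
    by (simp add: Sep_transport[OF g2])
  finally have sl: "slash k (fcoc k \<Delta> g1) g2 = (\<Sum>Q\<in>Sep \<Delta> (vinv g2) (vinv (mmul g1 g2)). qpoly Q ^ k)" .
  have g12: "mmul g1 g2 \<in> SL2Zi" by (rule SL2_mmul[OF g1 g2])
  have fin3: "finite (Sep \<Delta> (vinv g2) (vinv (mmul g1 g2)))"
    unfolding Sep_transport[OF g2, symmetric] by (rule finite_imageI[OF Sep_fin_SL2[OF g1]])
  have nzv: "Re (Qval Q v) \<noteq> 0" if "Q \<in> Xf \<Delta>" "v \<in> {(1, 0), vinv g2, vinv (mmul g1 g2)}" for Q v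
  proof -
    have "fst v \<in> gauss_ints \<and> snd v \<in> gauss_ints \<and> v \<noteq> (0, 0)"
      using that(2) SL2_vinv[OF g2] SL2_vinv[OF g12] by auto
    then show ?thesis using Re_Qval_nz[OF that(1) nn, of "fst v" "snd v"] by simp
  qed
  have "fcoc k \<Delta> (mmul g1 g2) = fcoc k \<Delta> g2 + (\<Sum>Q\<in>Sep \<Delta> (vinv g2) (vinv (mmul g1 g2)). qpoly Q ^ k)"
    unfolding fcoc_def
    by (rule sep_add[OF nzv Sep_fin_SL2[OF g2] fin3 Sep_fin_SL2[OF g12] k])
  then show ?thesis using sl by (simp add: add.commute)
qed



lemma Qval_negv: "Qval Q (- p, - q) = Qval Q (p, q)"
  by (cases Q) simp

lemma fcoc_mneg: "fcoc k \<Delta> (mneg g) = fcoc k \<Delta> g"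
proof -
  obtain a b c e where g: "g = (a, b, c, e)" by (cases g) auto
  have "Sep \<Delta> (1, 0) (vinv (mneg g)) = Sep \<Delta> (1, 0) (vinv g)"
    using Qval_negv[of _ e "- c"] by (simp add: Sep_def g del: Qval.simps)
  then show ?thesis by (simp add: fcoc_def)
qed

lemma fcoc_Vkk: "fcoc k \<Delta> g \<in> Vkk k"
  unfolding fcoc_def Vkk_bideg
  by (rule bideg_sum) (simp add: qpoly_pow_Vkk[unfolded Vkk_bideg])

lemma fcoc_upper: assumes "e * cnj e = 1" shows "fcoc k \<Delta> (a, b, 0, e) = 0"
proof -
  have "Sep \<Delta> (1, 0) (vinv (a, b, 0, e)) = {}"
  proof -
    have "Qval Q (e, 0) = Qval Q (1, 0)" for Q
      using assms by (cases Q) (simp add: mult.assoc)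
    then show ?thesis by (auto simp: Sep_def simp del: Qval.simps)
  qed
  then show ?thesis by (simp add: fcoc_def)
qed

lemma fcoc_T: "fcoc k \<Delta> Tmat = 0" by (simp add: Tmat_def fcoc_upper)
lemma fcoc_Tw: "fcoc k \<Delta> Twmat = 0" by (simp add: Twmat_def fcoc_upper)
lemma fcoc_L: "fcoc k \<Delta> Lmat = 0" by (simp add: Lmat_def fcoc_upper)

lemma fcoc_Cp:
  assumes k: "odd k" and nn: "\<not> (\<exists>\<beta> \<in> gauss_ints. of_int \<Delta> = \<beta> * cnj \<beta>)"
  shows "fcoc k \<Delta> \<in> Cp k"
  unfolding Cp_def using fcoc_cocycle[OF _ _ k nn] fcoc_Vkk fcoc_mneg fcoc_T fcoc_Tw fcoc_L by blast

definition emb :: "int \<times> complex \<times> int \<Rightarrow> form" where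
  "emb x = (case x of (a, b, c) \<Rightarrow> (of_int a, b, of_int c))"

lemma emb_Pk: "emb ` Pk_index \<Delta> = Sep \<Delta> (1, 0) (vinv Smat)"
proof (intro equalityI subsetI)
  fix Q assume "Q \<in> emb ` Pk_index \<Delta>"
  then obtain a b c where abc: "(a, b, c) \<in> Pk_index \<Delta>" "Q = (of_int a, b, of_int c)"
    by (auto simp: emb_def)
  then show "Q \<in> Sep \<Delta> (1, 0) (vinv Smat)"
    by (auto simp: Sep_def Xf_def Pk_index_def Smat_def)
next
  fix Q assume Q: "Q \<in> Sep \<Delta> (1, 0) (vinv Smat)"
  obtain A B C where Qe: "Q = (A, B, C)" by (cases Q) auto
  have X: "A \<in> \<int>" "B \<in> gauss_ints" "C \<in> \<int>" "B * cnj B - A * C = of_int \<Delta>" "0 < Re A" "Re C < 0"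
    using Q by (auto simp: Sep_def Xf_def Qe Smat_def)
  obtain a c where ac: "A = of_int a" "C = of_int c" using X(1,3) by (auto elim!: Ints_cases)
  have "(a, B, c) \<in> Pk_index \<Delta>" using X by (simp add: Pk_index_def ac)
  moreover have "Q = emb (a, B, c)" by (simp add: emb_def Qe ac)
  ultimately show "Q \<in> emb ` Pk_index \<Delta>" by blast
qed

lemma fcoc_S: "fcoc k \<Delta> Smat = Pk_Delta k \<Delta>"
proof -
  have inj: "inj_on emb (Pk_index \<Delta>)" by (rule inj_onI) (auto simp: emb_def)
  have "Pk_Delta k \<Delta> = (\<Sum>x\<in>Pk_index \<Delta>. qpoly (emb x) ^ k)"
    unfolding Pk_Delta_def by (intro sum.cong refl) (auto simp: emb_def qpoly_def)
  also have "\<dots> = (\<Sum>Q\<in>emb ` Pk_index \<Delta>. qpoly Q ^ k)"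
    by (simp add: sum.reindex[OF inj])
  finally show ?thesis by (simp add: fcoc_def emb_Pk)
qed



lemma cst_1: "cst 1 = 1" by (simp add: cst_def one_pCons)
lemma cst_m1: "cst (-1) = -1" by (simp add: cst_minus cst_1)

lemma gi_uminus_iff [simp]: "- x \<in> gauss_ints \<longleftrightarrow> x \<in> gauss_ints"
  by (simp add: gi_iff)

lemma SL2_I: "Imat \<in> SL2Zi" by (simp add: SL2Zi_def Imat_def)
lemma SL2_S: "Smat \<in> SL2Zi" by (simp add: SL2Zi_def Smat_def)
lemma SL2_T: "Tmat \<in> SL2Zi" by (simp add: SL2Zi_def Tmat_def)
lemma SL2_Tw: "Twmat \<in> SL2Zi" by (simp add: SL2Zi_def Twmat_def)
lemma SL2_L: "Lmat \<in> SL2Zi" by (simp add: SL2Zi_def Lmat_def)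
lemma SL2_U: "Umat \<in> SL2Zi" by (simp add: Umat_def SL2_mmul SL2_T SL2_S)
lemma SL2_E: "Emat \<in> SL2Zi" by (simp add: Emat_def SL2_mmul SL2_Tw SL2_S SL2_L)

lemma Cp_D:
  assumes "f \<in> Cp k"
  shows "\<And>g. g \<in> SL2Zi \<Longrightarrow> f g \<in> Vkk k" "\<And>g. g \<in> SL2Zi \<Longrightarrow> f (mneg g) = f g"
    "\<And>g1 g2. g1 \<in> SL2Zi \<Longrightarrow> g2 \<in> SL2Zi \<Longrightarrow> f (mmul g1 g2) = slash k (f g1) g2 + f g2"
    "f Tmat = 0" "f Twmat = 0" "f Lmat = 0"
  using assms by (auto simp: Cp_def)

lemma Cp_I: assumes "f \<in> Cp k" shows "f Imat = 0"
proof -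
  note C = Cp_D[OF assms]
  have "f (mmul Lmat Lmat) = 0" using C(3)[OF SL2_L SL2_L] C(6) by simp
  moreover have "mmul Lmat Lmat = mneg Imat" by (simp add: Lmat_def Imat_def)
  ultimately show ?thesis using C(2)[OF SL2_I] by simp
qed

lemma Cp_Wkk:
  assumes "f \<in> Cp k"
  shows "f Smat \<in> Wkk k"
proof -
  note C = Cp_D[OF assms]
  let ?P = "f Smat"
  have PV: "?P \<in> Vkk k" by (rule C(1)[OF SL2_S])
  have I0: "f Imat = 0" by (rule Cp_I[OF assms])
  have mI0: "f (mneg Imat) = 0" using C(2)[OF SL2_I] I0 by simp
  have SI: "slash k ?P Imat = ?P" by (rule slash_Imat[OF PV])
  have "mmul Smat Smat = mneg Imat" by (simp add: Smat_def Imat_def)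
  then have k1: "slash k ?P Smat + ?P = 0" using C(3)[OF SL2_S SL2_S] mI0 by simp
  have "mmul Lmat Smat = mneg (mmul Smat Lmat)" by (simp add: Smat_def Lmat_def)
  then have "f (mmul Lmat Smat) = f (mmul Smat Lmat)"
    using C(2)[OF SL2_mmul[OF SL2_S SL2_L]] by simp
  then have k2: "?P = slash k ?P Lmat"
    using C(3)[OF SL2_L SL2_S] C(3)[OF SL2_S SL2_L] C(6) by simp
  have fU: "f Umat = ?P" using C(3)[OF SL2_T SL2_S] C(4) by (simp add: Umat_def)
  have SL2_UU: "mmul Umat Umat \<in> SL2Zi" by (rule SL2_mmul[OF SL2_U SL2_U])
  have fUU: "f (mmul Umat Umat) = slash k ?P Umat + ?P" using C(3)[OF SL2_U SL2_U] fU by simp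
  have "mmul Umat (mmul Umat Umat) = mneg Imat" by (simp add: Umat_def Tmat_def Smat_def Imat_def)
  then have k3: "slash k ?P (mmul Umat Umat) + (slash k ?P Umat + ?P) = 0"
    using C(3)[OF SL2_U SL2_UU] fU fUU mI0 by simp
  have fTS: "f (mmul Twmat Smat) = ?P" using C(3)[OF SL2_Tw SL2_S] C(5) by simp
  have fE: "f Emat = ?P" unfolding Emat_def
    using C(3)[OF SL2_mmul[OF SL2_Tw SL2_S] SL2_L] fTS C(6) k2 by simp
  have SL2_EE: "mmul Emat Emat \<in> SL2Zi" by (rule SL2_mmul[OF SL2_E SL2_E])
  have fEE: "f (mmul Emat Emat) = slash k ?P Emat + ?P" using C(3)[OF SL2_E SL2_E] fE by simp
  have "mmul Emat (mmul Emat Emat) = Imat" by (simp add: Emat_def Twmat_def Smat_def Lmat_def Imat_def)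
  then have k4: "slash k ?P (mmul Emat Emat) + (slash k ?P Emat + ?P) = 0"
    using C(3)[OF SL2_E SL2_EE] fE fEE I0 by simp
  show ?thesis
    unfolding Wkk_def kerX_def slash_gr_def
    using PV SI k1 k2 k3 k4 by (simp add: cst_1 cst_m1 add.commute add.left_commute)
qed



lemma gi_unit:
  assumes a: "a \<in> gauss_ints" and e: "e \<in> gauss_ints" and ae: "a * e = 1"
  shows "a = 1 \<or> a = -1 \<or> a = \<i> \<or> a = - \<i>"
proof -
  have a0: "a \<noteq> 0" and e0: "e \<noteq> 0" using ae by auto
  have "real (gnorm a) * real (gnorm e) = 1"
    using gnorm_real[OF a] gnorm_real[OF e] ae
    by (metis norm_mult norm_one power_mult_distrib one_power2)
  then have "gnorm a * gnorm e = 1" by (metis of_nat_1 of_nat_eq_iff of_nat_mult)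
  then have "gnorm a = 1" by simp
  then have n1: "(cmod a)\<^sup>2 = 1" using gnorm_real[OF a] by simp
  obtain x y where xy: "Re a = of_int x" "Im a = of_int y" using a by (auto simp: gi_iff elim!: Ints_cases)
  have "real_of_int (x\<^sup>2 + y\<^sup>2) = 1" using n1 by (simp add: cmod_power2 xy)
  then have s: "x\<^sup>2 + y\<^sup>2 = 1" by linarith
  have "x\<^sup>2 \<le> 1" "y\<^sup>2 \<le> 1" using s zero_le_power2[of x] zero_le_power2[of y] by linarith+
  then have "\<bar>x\<bar> \<le> 1" "\<bar>y\<bar> \<le> 1" using abs_le_square_iff[of x 1] abs_le_square_iff[of y 1] by auto
  then have "x \<in> {-1, 0, 1}" "y \<in> {-1, 0, 1}" by auto
  then have "(x, y) \<in> {(1, 0), (-1, 0), (0, 1), (0, -1)}" using s by auto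
  then show ?thesis using xy by (auto simp: complex_eq_iff)
qed

definition Tq :: "complex \<Rightarrow> mat2" where "Tq q = (1, q, 0, 1)"

lemma Tq_mult: "mmul (Tq x) (Tq y) = Tq (x + y)" by (simp add: Tq_def)
lemma SL2_Tq: "q \<in> gauss_ints \<Longrightarrow> Tq q \<in> SL2Zi" by (simp add: Tq_def SL2Zi_def)

lemma uniqueness:
  assumes f: "f \<in> Cp k" and g: "g \<in> Cp k" and fg: "g Smat = f Smat"
  shows "\<forall>\<gamma>\<in>SL2Zi. g \<gamma> = f \<gamma>"
proof -
  note Cf = Cp_D[OF f] and Cg = Cp_D[OF g]
  define good where "good x \<longleftrightarrow> x \<in> SL2Zi \<and> g x = f x" for x
  have mult: "good (mmul x y)" if "good x" "good y" for x y
    using that Cf(3) Cg(3) SL2_mmul by (auto simp: good_def)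
  have inv: "good y" if "good x" "y \<in> SL2Zi" "mmul x y = Imat" for x y
  proof -
    have "g (mmul x y) = f (mmul x y)" using that Cp_I[OF f] Cp_I[OF g] by simp
    then show ?thesis using that Cf(3)[of x y] Cg(3)[of x y] by (auto simp: good_def)
  qed
  have gneg: "good (mneg x)" if "good x" for x
    using that Cf(2) Cg(2) by (cases x) (auto simp: good_def SL2Zi_def)
  have gI: "good Imat" using Cp_I[OF f] Cp_I[OF g] SL2_I by (simp add: good_def)
  have gS: "good Smat" using fg SL2_S by (simp add: good_def)
  have gT: "good (Tq 1)" using Cf(4) Cg(4) SL2_T by (simp add: good_def Tq_def Tmat_def)
  have gTw: "good (Tq \<i>)" using Cf(5) Cg(5) SL2_Tw by (simp add: good_def Tq_def Twmat_def)
  have gL: "good Lmat" using Cf(6) Cg(6) SL2_L by (simp add: good_def)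
  have gTm: "good (Tq (- 1))" by (rule inv[OF gT SL2_Tq]) (auto simp: Tq_def Imat_def)
  have gTwm: "good (Tq (- \<i>))" by (rule inv[OF gTw SL2_Tq]) (auto simp: Tq_def Imat_def)
  have gTint: "good (Tq (of_int m * u))" if "good (Tq u)" "good (Tq (- u))" for m u
  proof (induction m rule: int_induct[where k=0])
    case base
    then show ?case using gI by (simp add: Tq_def Imat_def)
  next
    case (step1 i)
    have "Tq (of_int (i + 1) * u) = mmul (Tq (of_int i * u)) (Tq u)" by (simp add: Tq_mult algebra_simps)
    then show ?case using mult[OF step1(2) that(1)] by simp
  next
    case (step2 i)
    have "Tq (of_int (i - 1) * u) = mmul (Tq (of_int i * u)) (Tq (- u))" by (simp add: Tq_mult algebra_simps)
    then show ?case using mult[OF step2(2) that(2)] by simp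
  qed
  have gTq: "good (Tq q)" if qG: "q \<in> gauss_ints" for q
  proof -
    obtain x y where xy: "Re q = of_int x" "Im q = of_int y" using qG by (auto simp: gi_iff elim!: Ints_cases)
    have "q = of_int x * 1 + of_int y * \<i>" using xy by (simp add: complex_eq_iff)
    then have "Tq q = mmul (Tq (of_int x * 1)) (Tq (of_int y * \<i>))" by (simp add: Tq_mult)
    then show ?thesis using mult[OF gTint[OF gT] gTint[OF gTw]] gTm gTwm by simp
  qed
  have gSi: "good (mneg Smat)" by (rule gneg[OF gS])
  have main: "\<forall>a b c e. (a, b, c, e) \<in> SL2Zi \<longrightarrow> gnorm c = n \<longrightarrow> good (a, b, c, e)" for n
  proof (induction n rule: less_induct)
    case (less n)
    show ?case
    proof (intro allI impI)
      fix a b c e assume ge: "(a, b, c, e) \<in> SL2Zi" and n: "gnorm c = n"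
      have G: "a \<in> gauss_ints" "b \<in> gauss_ints" "c \<in> gauss_ints" "e \<in> gauss_ints" "a * e - b * c = 1"
        using ge by (auto simp: SL2Zi_def)
      show "good (a, b, c, e)"
      proof (cases "c = 0")
        case True
        then have ae: "a * e = 1" using G(5) by simp
        have "(a, b, c, e) = mmul (a, 0, 0, e) (Tq (b * e))"
          using True ae by (simp add: Tq_def algebra_simps)
        moreover have "good (a, 0, 0, e)"
        proof -
          have a0: "a \<noteq> 0" using ae by auto
          have "e = 1 / a" using a0 ae by (simp add: eq_divide_eq mult.commute)
          then consider "a = 1" "e = 1" | "a = -1" "e = -1" | "a = \<i>" "e = - \<i>" | "a = - \<i>" "e = \<i>"
            using gi_unit[OF G(1) G(4) ae] by (auto simp: divide_complex_def)
          then show ?thesis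
          proof cases
            case 1 then show ?thesis using gI by (simp add: Imat_def)
          next
            case 2 then show ?thesis using gneg[OF gI] by (simp add: Imat_def)
          next
            case 3 then show ?thesis using gL by (simp add: Lmat_def)
          next
            case 4 then show ?thesis using gneg[OF gL] by (simp add: Lmat_def)
          qed
        qed
        ultimately show ?thesis using mult gTq[OF gi_mult[OF G(2) G(4)]] by metis
      next
        case False
        obtain q where q: "q \<in> gauss_ints" "cmod (a - q * c) < cmod c"
          using gauss_div[OF G(1) G(3) False] by blast
        define \<gamma>2 where "\<gamma>2 = (- c, - e, a - q * c, b - q * e)"
        have "(- c) * (b - q * e) - (- e) * (a - q * c) = a * e - b * c" by (simp add: algebra_simps)
        then have g2S: "\<gamma>2 \<in> SL2Zi" using G q(1) by (auto simp: \<gamma>2_def SL2Zi_def)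
        have "gnorm (a - q * c) < n" using gnorm_less[OF _ G(3) q(2)] G q(1) n by auto
        then have g2: "good \<gamma>2" using less.IH g2S by (simp add: \<gamma>2_def)
        have "(a, b, c, e) = mmul (Tq q) (mmul (mneg Smat) \<gamma>2)"
          by (simp add: Tq_def Smat_def \<gamma>2_def algebra_simps)
        then show ?thesis using mult[OF gTq[OF q(1)] mult[OF gSi g2]] by simp
      qed
    qed
  qed
  show ?thesis
  proof
    fix \<gamma> assume "\<gamma> \<in> SL2Zi"
    then show "g \<gamma> = f \<gamma>" using main by (cases \<gamma>) (auto simp: good_def)
  qed
qed



fun rot :: "form \<Rightarrow> form" where "rot (A, B, C) = (A, \<i> * B, C)"
fun rotinv :: "form \<Rightarrow> form" where "rotinv (A, B, C) = (A, - \<i> * B, C)"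

lemma rot_norm [simp]: "- (\<i> * b * (\<i> * cnj b)) = b * cnj b"
proof -
  have "\<i> * b * (\<i> * cnj b) = \<i> * (\<i> * (b * cnj b))" by (simp only: mult_ac)
  then show ?thesis by simp
qed

lemma rot_S0: "Q \<in> Sep \<Delta> (1, 0) (vinv Smat) \<Longrightarrow> rot Q \<in> Sep \<Delta> (1, 0) (vinv Smat)"
  by (cases Q) (auto simp: Sep_def Xf_def Smat_def gi_mult)

lemma rotinv_S0: "Q \<in> Sep \<Delta> (1, 0) (vinv Smat) \<Longrightarrow> rotinv Q \<in> Sep \<Delta> (1, 0) (vinv Smat)"
proof -
  assume "Q \<in> Sep \<Delta> (1, 0) (vinv Smat)"
  moreover have "- \<i> \<in> gauss_ints" by simp
  ultimately show ?thesis by (cases Q) (auto simp: Sep_def Xf_def Smat_def gi_mult simp del: gi_uminus_iff)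
qed

lemma rotation:
  "eval2 (fcoc k \<Delta> Smat) (\<i> * z) (cnj \<i> * w) = eval2 (fcoc k \<Delta> Smat) z w"
proof -
  let ?S = "Sep \<Delta> (1, 0) (vinv Smat)"
  have "eval2 (fcoc k \<Delta> Smat) (\<i> * z) (cnj \<i> * w) = (\<Sum>Q\<in>?S. eval2 (qpoly Q ^ k) (\<i> * z) (cnj \<i> * w))"
    by (simp add: fcoc_def eval2_sum)
  also have "\<dots> = (\<Sum>Q\<in>?S. eval2 (qpoly Q ^ k) z w)"
  proof (rule sum.reindex_bij_witness[where i=rotinv and j=rot])
    fix Q assume "Q \<in> ?S"
    show "rotinv (rot Q) = Q" by (cases Q) simp
    show "rot Q \<in> ?S" using \<open>Q \<in> ?S\<close> by (rule rot_S0)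
    show "rot (rotinv Q) = Q" by (cases Q) simp
    show "rotinv Q \<in> ?S" using \<open>Q \<in> ?S\<close> by (rule rotinv_S0)
    show "eval2 (qpoly (rot Q) ^ k) z w = eval2 (qpoly Q ^ k) (\<i> * z) (cnj \<i> * w)"
      by (cases Q) (simp add: eval2_qpoly algebra_simps)
  qed
  also have "\<dots> = eval2 (fcoc k \<Delta> Smat) z w"
    by (simp add: fcoc_def eval2_sum)
  finally show ?thesis .
qed

theorem proposition5p3:
  fixes k :: nat and \<Delta> :: int
  assumes "0 < \<Delta>"
    and "\<not> (\<exists>\<beta> \<in> gauss_ints. of_int \<Delta> = \<beta> * cnj \<beta>)"
    and "1 \<le> k" and "odd k"
  shows "Pk_Delta k \<Delta> \<in> Wkk1 k
    \<and> (\<exists>f \<in> Cp k. f Smat = Pk_Delta k \<Delta>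
          \<and> (\<forall>g \<in> Cp k. g Smat = Pk_Delta k \<Delta> \<longrightarrow> (\<forall>\<gamma> \<in> SL2Zi. g \<gamma> = f \<gamma>)))"
proof -
  have fC: "fcoc k \<Delta> \<in> Cp k" by (rule fcoc_Cp[OF assms(4) assms(2)])
  have W: "Pk_Delta k \<Delta> \<in> Wkk k" using Cp_Wkk[OF fC] by (simp add: fcoc_S)
  have "Pk_Delta k \<Delta> \<in> Wkk1 k"
    using W rotation[of k \<Delta>] by (simp add: Wkk1_def fcoc_S)
  moreover have "\<forall>g \<in> Cp k. g Smat = Pk_Delta k \<Delta> \<longrightarrow> (\<forall>\<gamma> \<in> SL2Zi. g \<gamma> = fcoc k \<Delta> \<gamma>)"
    using uniqueness[OF fC] by (simp add: fcoc_S)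
  ultimately show ?thesis using fC fcoc_S by blast
qed

end
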